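(* Suppose that $\mathbf{unif}<\mathbf{b}$. Then there exists a nonprincipal filter on $\omega$ which is meager but not Lebesgue measurable (as a subset of $2^\omega$).
   Context: $\mathbf{b}$ is the smallest size of a family of functions in $\omega^\omega$ that is unbounded with respect to eventual domination; $\mathbf{unif}$ is the smallest size of a non-measurable (equivalently, not measure zero) subset of $2^\omega$. A filter on $\omega$ is identified with the set of characteristic functions of its elements, a subset of $2^\omega$, which carries the product topology and the standard product (Lebesgue) measure. *)

theory Defs
  imports "HOL-Analysis.Analysis" "HOL-Probability.Probability"
begin

text \<open>Cantor space 2^omega is the type nat => bool; it carries the product
topology (bool is discrete) via the library instance for function types.\<close>

definition nowhere_dense :: "(nat \<Rightarrow> bool) set \<Rightarrow> bool" where
  "nowhere_dense S \<longleftrightarrow> interior (closure S) = {}"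

definition meager :: "(nat \<Rightarrow> bool) set \<Rightarrow> bool" where
  "meager S \<longleftrightarrow> (\<exists>N :: nat \<Rightarrow> (nat \<Rightarrow> bool) set.
      (\<forall>n. nowhere_dense (N n)) \<and> S \<subseteq> (\<Union>n. N n))"

definition coin_measure :: "(nat \<Rightarrow> bool) measure" where
  "coin_measure = PiM UNIV (\<lambda>_::nat. measure_pmf (bernoulli_pmf (1/2)))"

definition lebesgue_measurable_cantor :: "(nat \<Rightarrow> bool) set \<Rightarrow> bool" where
  "lebesgue_measurable_cantor A \<longleftrightarrow> A \<in> sets (completion coin_measure)"

definition measure_zero_cantor :: "(nat \<Rightarrow> bool) set \<Rightarrow> bool" where
  "measure_zero_cantor A \<longleftrightarrow> A \<in> null_sets (completion coin_measure)"

definition eventually_dominated :: "(nat \<Rightarrow> nat) \<Rightarrow> (nat \<Rightarrow> nat) \<Rightarrow> bool" where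
  "eventually_dominated f g \<longleftrightarrow> (\<forall>\<^sub>F n in sequentially. f n \<le> g n)"

definition unbounded_family :: "(nat \<Rightarrow> nat) set \<Rightarrow> bool" where
  "unbounded_family F \<longleftrightarrow> \<not> (\<exists>g. \<forall>f\<in>F. eventually_dominated f g)"

text \<open>Since cardinals are well-ordered this is exactly
  min{|X| : X not null} < min{|F| : F unbounded}.\<close>

definition unif_less_b :: bool where
  "unif_less_b \<longleftrightarrow> (\<exists>X :: (nat \<Rightarrow> bool) set. \<not> measure_zero_cantor X \<and>
      (\<forall>F :: (nat \<Rightarrow> nat) set. unbounded_family F \<longrightarrow> (card_of X, card_of F) \<in> ordLess))"

definition filter_on_nat :: "nat set set \<Rightarrow> bool" where
  "filter_on_nat \<F> \<longleftrightarrow> UNIV \<in> \<F> \<and> {} \<notin> \<F> \<and>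
     (\<forall>A B. A \<in> \<F> \<longrightarrow> A \<subseteq> B \<longrightarrow> B \<in> \<F>) \<and>
     (\<forall>A B. A \<in> \<F> \<longrightarrow> B \<in> \<F> \<longrightarrow> A \<inter> B \<in> \<F>)"

definition nonprincipal :: "nat set set \<Rightarrow> bool" where
  "nonprincipal \<F> \<longleftrightarrow> (\<forall>A. finite (UNIV - A) \<longrightarrow> A \<in> \<F>)"

definition char_funs :: "nat set set \<Rightarrow> (nat \<Rightarrow> bool) set" where
  "char_funs \<F> = (\<lambda>A n. n \<in> A) ` \<F>"

end

theory Submission
  imports Defs "HOL-Algebra.Free_Abelian_Groups"
begin

abbreviation Bh :: "bool measure" where "Bh \<equiv> measure_pmf (bernoulli_pmf (1/2))"

definition flip :: "nat set \<Rightarrow> (nat \<Rightarrow> bool) \<Rightarrow> (nat \<Rightarrow> bool)" where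
  "flip s x = (\<lambda>i. if i \<in> s then \<not> x i else x i)"

lemma space_coin[simp]: "space coin_measure = UNIV"
  unfolding coin_measure_def by (simp add: space_PiM)

lemma prob_space_coin: "prob_space coin_measure"
  unfolding coin_measure_def by (intro prob_space_PiM) (simp add: prob_space_measure_pmf)

lemma Bh_Not: "emeasure Bh (Not -` A) = emeasure Bh A"
proof -
  have "A = {} \<or> A = {True} \<or> A = {False} \<or> A = UNIV"
    by (metis (full_types) UNIV_eq_I insertCI subsetI subset_singletonD)
  moreover have "Not -` {True} = {False}" "Not -` {False} = {True}" by auto
  ultimately show ?thesis
    apply (elim disjE)
    apply simp_all
    apply (simp add: emeasure_pmf_single)
    apply (simp add: emeasure_pmf_single)
    done
qed

lemma flip_measurable[measurable]: "flip s \<in> coin_measure \<rightarrow>\<^sub>M coin_measure"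
  unfolding coin_measure_def flip_def
  by (intro measurable_PiM_single') (auto)


lemma distr_flip: "distr coin_measure coin_measure (flip s) = coin_measure"
proof (rule measure_eqI_PiM_infinite[symmetric, of _ UNIV "\<lambda>_. Bh"])
  show "sets coin_measure = sets (PiM UNIV (\<lambda>_. Bh))" by (simp add: coin_measure_def)
  show "sets (distr coin_measure coin_measure (flip s)) = sets (PiM UNIV (\<lambda>_. Bh))" by (simp add: coin_measure_def)
  show "finite_measure coin_measure"
    using prob_space_coin by (simp add: prob_space_def)
  fix A J assume J: "finite J" "J \<subseteq> (UNIV::nat set)" and A: "\<And>i. i \<in> J \<Longrightarrow> A i \<in> sets Bh"
  let ?A' = "\<lambda>i. if i \<in> s then Not -` A i else A i"
  have pre: "flip s -` prod_emb UNIV (\<lambda>_. Bh) J (Pi\<^sub>E J A) = prod_emb UNIV (\<lambda>_. Bh) J (Pi\<^sub>E J ?A')"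
    unfolding prod_emb_def flip_def
    apply (auto simp: PiE_iff extensional_def space_PiM)
    apply (drule (1) bspec, simp split: if_splits)+
    done
  have "emeasure (distr coin_measure coin_measure (flip s)) (prod_emb UNIV (\<lambda>_. Bh) J (Pi\<^sub>E J A))
      = emeasure coin_measure (prod_emb UNIV (\<lambda>_. Bh) J (Pi\<^sub>E J ?A'))"
    using J A flip_measurable[of s] by (subst emeasure_distr) (auto simp: pre coin_measure_def intro!: sets_PiM_I)
  also have "\<dots> = (\<Prod>i\<in>J. emeasure Bh (?A' i))"
    unfolding coin_measure_def using J A by (intro emeasure_PiM_emb) (auto simp: prob_space_measure_pmf)
  also have "\<dots> = (\<Prod>i\<in>J. emeasure Bh (A i))"
    by (intro prod.cong) (auto simp: Bh_Not)
  also have "\<dots> = emeasure coin_measure (prod_emb UNIV (\<lambda>_. Bh) J (Pi\<^sub>E J A))"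
    unfolding coin_measure_def using J A by (intro emeasure_PiM_emb[symmetric]) (auto simp: prob_space_measure_pmf)
  finally show "emeasure coin_measure (prod_emb UNIV (\<lambda>_. Bh) J (Pi\<^sub>E J A)) =
     emeasure (distr coin_measure coin_measure (flip s)) (prod_emb UNIV (\<lambda>_. Bh) J (Pi\<^sub>E J A))" by simp
qed

lemma flip_sets: "S \<in> sets coin_measure \<Longrightarrow> flip s -` S \<in> sets coin_measure"
  using measurable_sets[OF flip_measurable[of s], of S] by simp

lemma flip_null: "N \<in> null_sets coin_measure \<Longrightarrow> flip s -` N \<in> null_sets coin_measure"
proof -
  assume N: "N \<in> null_sets coin_measure"
  have m: "flip s -` N \<in> sets coin_measure"
    using N by (auto intro: flip_sets)
  have "emeasure coin_measure (flip s -` N) = emeasure (distr coin_measure coin_measure (flip s)) N"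
    using N flip_measurable[of s] by (subst emeasure_distr) auto
  also have "\<dots> = 0" using N by (simp add: distr_flip null_setsD1)
  finally show ?thesis using m by (simp add: null_sets_def)
qed


lemma flip_emeasure: "S \<in> sets coin_measure \<Longrightarrow> emeasure coin_measure (flip s -` S) = emeasure coin_measure S"
proof -
  assume S: "S \<in> sets coin_measure"
  have "emeasure coin_measure (flip s -` S) = emeasure (distr coin_measure coin_measure (flip s)) S"
    using S flip_measurable[of s] by (subst emeasure_distr) auto
  then show ?thesis by (simp add: distr_flip)
qed

lemma flip_flip[simp]: "flip s (flip s x) = x" by (auto simp: flip_def)
lemma flip_comp: "flip s (flip t x) = flip ((s - t) \<union> (t - s)) x" by (auto simp: flip_def)
lemma flip_empty[simp]: "flip {} x = x" by (auto simp: flip_def)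

definition coordA :: "nat \<Rightarrow> (nat \<Rightarrow> bool) set set" where
  "coordA i = sigma_sets (space coin_measure) {(\<lambda>x. x i) -` C \<inter> space coin_measure | C. C \<in> sets Bh}"

lemma coin_indep: "prob_space.indep_sets coin_measure coordA UNIV"
proof -
  interpret P: prob_space coin_measure by (rule prob_space_coin)
  have rv: "(\<lambda>x. x i) \<in> measurable coin_measure Bh" for i
    using measurable_component_singleton[of i UNIV "\<lambda>_. Bh"] by (simp add: coin_measure_def)
  have "(\<lambda>x. \<lambda>i\<in>UNIV. x i) = (\<lambda>x::nat\<Rightarrow>bool. x)" by (intro ext) (simp add: restrict_def)
  moreover have "distr coin_measure Bh (\<lambda>x. x i) = Bh" for i
    unfolding coin_measure_def by (rule distr_PiM_component) (auto simp: prob_space_measure_pmf)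
  ultimately have "distr coin_measure (\<Pi>\<^sub>M i\<in>UNIV. Bh) (\<lambda>x. \<lambda>i\<in>UNIV. x i) = (\<Pi>\<^sub>M i\<in>UNIV. distr coin_measure Bh (\<lambda>x. x i))"
    by (simp add: coin_measure_def distr_id)
  then have "P.indep_vars (\<lambda>_. Bh) (\<lambda>i x. x i) UNIV"
    using P.indep_vars_iff_distr_eq_PiM[where I=UNIV and M'="\<lambda>_. Bh" and X="\<lambda>i x. x i"] rv by simp
  then show ?thesis unfolding P.indep_vars_def coordA_def by simp
qed

lemma zero_one:
  fixes F :: "(nat\<Rightarrow>bool) set"
  assumes inv: "\<And>s x. finite s \<Longrightarrow> x \<in> F \<Longrightarrow> flip s x \<in> F"
  and disj: "\<And>x. x \<in> F \<Longrightarrow> flip UNIV x \<notin> F"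
  and meas: "F \<in> sets (completion coin_measure)"
  shows "F \<in> null_sets (completion coin_measure)"
proof -
  interpret P: prob_space coin_measure by (rule prob_space_coin)
  obtain S N N' where FSN: "F = S \<union> N" "N \<subseteq> N'" and N': "N' \<in> null_sets coin_measure"
    and S: "S \<in> sets coin_measure"
    using meas by (rule sets_completionE)
  define Fin where "Fin = {s::nat set. finite s}"
  have cFin: "countable Fin" unfolding Fin_def by (rule countable_Collect_finite)
  define B where "B = (\<Inter>s\<in>Fin. flip s -` S)"
  define NN where "NN = (\<Union>s\<in>Fin. flip s -` N')"
  have Bm: "B \<in> sets coin_measure"
    unfolding B_def using cFin S by (intro sets.countable_INT') (auto simp: Fin_def flip_sets)
  have NN: "NN \<in> null_sets coin_measure"
    unfolding NN_def using cFin N' by (intro null_sets_UN') (auto simp: flip_null)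
  have FB: "F \<subseteq> B \<union> NN"
  proof
    fix x assume x: "x \<in> F"
    show "x \<in> B \<union> NN"
    proof (cases "x \<in> B")
      case False
      then obtain s where s: "s \<in> Fin" "flip s x \<notin> S" unfolding B_def by auto
      have "flip s x \<in> F" using inv[of s x] x s by (auto simp: Fin_def)
      then have "flip s x \<in> N'" using s FSN by auto
      then show ?thesis using s unfolding NN_def by auto
    qed simp
  qed
  have BF: "B \<subseteq> F \<union> NN"
  proof
    fix x assume "x \<in> B"
    then have "flip {} x \<in> S" unfolding B_def Fin_def by blast
    then show "x \<in> F \<union> NN" using FSN by auto
  qed
  have Binv1: "flip t x \<in> B" if "x \<in> B" "finite t" for x t
  proof -
    have "flip s (flip t x) \<in> S" if "finite s" for s
    proof -
      have "finite ((s - t) \<union> (t - s))" using \<open>finite s\<close> \<open>finite t\<close> by auto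
      then have "flip ((s - t) \<union> (t - s)) x \<in> S" using \<open>x \<in> B\<close> unfolding B_def Fin_def by blast
      then show ?thesis by (simp add: flip_comp)
    qed
    then show ?thesis unfolding B_def Fin_def by auto
  qed
  have Binv: "flip t x \<in> B \<longleftrightarrow> x \<in> B" if "finite t" for x t
    using Binv1[OF _ that, of x] Binv1[OF _ that, of "flip t x"] by auto
  have tail: "B \<in> P.tail_events coordA"
    unfolding P.tail_events_def
  proof (intro INT_I)
    fix n :: nat
    define G where "G = \<Union> (coordA ` {n..})"
    have GP: "G \<subseteq> Pow UNIV" by auto
    define Mn where "Mn = sigma UNIV G"
    have sMn: "sets Mn = sigma_sets UNIV G" unfolding Mn_def using GP by (rule sets_measure_of)
    have spMn: "space Mn = UNIV" unfolding Mn_def using GP by (rule space_measure_of)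
    define p where "p = (\<lambda>x::nat\<Rightarrow>bool. \<lambda>i. if i < n then False else x i)"
    have pm: "p \<in> measurable Mn coin_measure"
      unfolding p_def coin_measure_def
    proof (rule measurable_PiM_single'[where f="\<lambda>i x. if i < n then False else x i"])
      fix i :: nat
      show "(\<lambda>x. if i < n then False else x i) \<in> measurable Mn Bh"
      proof (cases "i < n")
        case True then show ?thesis by simp
      next
        case False
        have "(\<lambda>x. x i) \<in> measurable Mn Bh"
        proof (rule measurableI)
          fix x show "x i \<in> space Bh" by simp
        next
          fix C assume "C \<in> sets Bh"
          then have "(\<lambda>x. x i) -` C \<inter> space coin_measure \<in> coordA i" unfolding coordA_def by (intro sigma_sets.Basic) blast
          then have "(\<lambda>x. x i) -` C \<inter> UNIV \<in> G" using False unfolding G_def by auto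
          then show "(\<lambda>x. x i) -` C \<inter> space Mn \<in> sets Mn" using sMn spMn by auto
        qed
        then show ?thesis using False by simp
      qed
    qed (auto simp: spMn)
    have "p -` B \<inter> space Mn \<in> sets Mn" using measurable_sets[OF pm Bm] .
    moreover have "p -` B = B"
    proof -
      have "p x = flip {i. i < n \<and> x i} x" for x unfolding p_def flip_def by auto
      then show ?thesis using Binv[of "{i. i < n \<and> x i}" x for x] by auto
    qed
    ultimately show "B \<in> sigma_sets (space coin_measure) G" using sMn spMn by simp
  qed
  have sa: "\<And>i. sigma_algebra (space coin_measure) (coordA i)"
    unfolding coordA_def by (rule sigma_algebra_sigma_sets) auto
  have zo: "P.prob B = 0 \<or> P.prob B = 1"
    by (rule P.kolmogorov_0_1_law[OF sa coin_indep tail])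
  define C where "C = flip UNIV -` B"
  have Cm: "C \<in> sets coin_measure" unfolding C_def using Bm by (rule flip_sets)
  have PC: "P.prob C = P.prob B"
    unfolding C_def using Bm flip_emeasure[OF Bm, of UNIV] by (simp add: P.emeasure_eq_measure)
  have BC: "B \<inter> C \<subseteq> NN \<union> flip UNIV -` NN"
  proof
    fix x assume x: "x \<in> B \<inter> C"
    then have "x \<in> F \<union> NN" "flip UNIV x \<in> F \<union> NN" using BF unfolding C_def by auto
    then show "x \<in> NN \<union> flip UNIV -` NN" using disj[of x] by auto
  qed
  have BCnull: "B \<inter> C \<in> null_sets coin_measure"
    using BC NN flip_null[OF NN, of UNIV] Bm Cm
    by (meson null_sets.Un null_sets_subset sets.Int)
  have "P.prob B \<noteq> 1"
  proof
    assume "P.prob B = 1"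
    then have "P.prob C = 1" using PC by simp
    have "P.prob (UNIV - C) = 0" using \<open>P.prob C = 1\<close> P.prob_compl[OF Cm] by simp
    have "P.prob B \<le> P.prob ((B \<inter> C) \<union> (UNIV - C))"
      using Bm Cm sets.compl_sets[OF Cm] by (intro P.finite_measure_mono) auto
    also have "\<dots> \<le> P.prob (B \<inter> C) + P.prob (UNIV - C)"
      using Bm Cm sets.compl_sets[OF Cm] by (intro measure_subadditive) (auto simp: P.emeasure_finite)
    also have "\<dots> = 0" using BCnull \<open>P.prob (UNIV - C) = 0\<close> by (simp add: measure_def null_setsD1)
    finally show False using \<open>P.prob B = 1\<close> by simp
  qed
  with zo have "P.prob B = 0" by simp
  then have "B \<in> null_sets coin_measure" using Bm by (simp add: P.emeasure_eq_measure null_sets_def)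
  then have "B \<union> NN \<in> null_sets coin_measure" using NN by auto
  then show ?thesis using FB null_sets_completion_iff2 by blast
qed

lemma meager_partition:
  fixes a :: "nat \<Rightarrow> nat"
  assumes a: "\<And>j. j \<le> a j"
  shows "meager {x. \<exists>k. \<forall>j\<ge>k. \<exists>i. a j \<le> i \<and> i < a (Suc j) \<and> x i}"
proof -
  define N where "N k = {x::nat\<Rightarrow>bool. \<forall>j\<ge>k. \<exists>i. a j \<le> i \<and> i < a (Suc j) \<and> x i}" for k
  have cl: "closed (N k)" for k
  proof -
    have ci: "closed {x::nat\<Rightarrow>bool. x i}" for i
    proof -
      have "open {f::nat\<Rightarrow>bool. \<forall>j\<in>{i}. f j \<in> {..<True}}"
        by (rule product_topology_basis') auto
      moreover have "{f::nat\<Rightarrow>bool. \<forall>j\<in>{i}. f j \<in> {..<True}} = - {x. x i}" by auto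
      ultimately show ?thesis by (simp add: closed_def)
    qed
    have "N k = (\<Inter>j\<in>{k..}. \<Union>i\<in>{a j..<a (Suc j)}. {x. x i})"
    proof (intro equalityI subsetI)
      fix x assume "x \<in> N k" then show "x \<in> (\<Inter>j\<in>{k..}. \<Union>i\<in>{a j..<a (Suc j)}. {x. x i})"
        unfolding N_def by fastforce
    next
      fix x assume "x \<in> (\<Inter>j\<in>{k..}. \<Union>i\<in>{a j..<a (Suc j)}. {x. x i})" then show "x \<in> N k"
        unfolding N_def by fastforce
    qed
    then show ?thesis using ci by (auto intro!: closed_INT closed_UN)
  qed
  have int: "interior (N k) = {}" for k
  proof (rule ccontr)
    assume "interior (N k) \<noteq> {}"
    then obtain x where "x \<in> interior (N k)" by auto
    then obtain W where W: "open W" "x \<in> W" "W \<subseteq> N k" by (meson interiorE)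
    from W have "openin (product_topology (\<lambda>i. euclidean) UNIV) W" by (simp add: open_fun_def)
    from product_topology_open_contains_basis[OF this W(2)] obtain X where
      X: "x \<in> PiE UNIV X" "finite {i. X i \<noteq> topspace euclidean}" "PiE UNIV X \<subseteq> W" by auto
    define J where "J = {i. X i \<noteq> UNIV}"
    have fJ: "finite J" using X(2) by (simp add: J_def)
    define j where "j = max k (Suc (Max (insert 0 J)))"
    have jk: "j \<ge> k" unfolding j_def by simp
    have Jj: "i < a j" if "i \<in> J" for i
    proof -
      have "i \<le> Max (insert 0 J)" using fJ that by simp
      also have "\<dots> < j" unfolding j_def by simp
      also have "j \<le> a j" by (rule a)
      finally show ?thesis .
    qed
    define y where "y = (\<lambda>i. if a j \<le> i \<and> i < a (Suc j) then False else x i)"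
    have "y \<in> PiE UNIV X"
    proof -
      have "y i \<in> X i" for i
      proof (cases "i \<in> J")
        case True
        then have "y i = x i" using Jj[OF True] unfolding y_def by auto
        then show ?thesis using X(1) by auto
      next
        case False
        then show ?thesis unfolding J_def by auto
      qed
      then show ?thesis by auto
    qed
    then have "y \<in> N k" using X W by auto
    then show False using jk unfolding N_def y_def by auto
  qed
  show ?thesis unfolding meager_def
  proof (intro exI conjI allI)
    show "nowhere_dense (N n)" for n
      unfolding nowhere_dense_def using closure_closed[OF cl[of n]] int[of n] by simp
    show "{x. \<exists>k. \<forall>j\<ge>k. \<exists>i. a j \<le> i \<and> i < a (Suc j) \<and> x i} \<subseteq> (\<Union>n. N n)"
      unfolding N_def by auto
  qed
qed

lemma ultra_exists: "\<exists>U. filter_on_nat U \<and> nonprincipal U \<and> (\<forall>A. A \<in> U \<or> - A \<in> U)"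
proof -
  define P where "P = {F. filter_on_nat F \<and> nonprincipal F}"
  have cof: "{A::nat set. finite (- A)} \<in> P"
    unfolding P_def filter_on_nat_def nonprincipal_def
    by (auto simp: Compl_eq_Diff_UNIV[symmetric] intro: finite_subset)
  have "\<exists>M\<in>P. \<forall>X\<in>P. M \<subseteq> X \<longrightarrow> X = M"
  proof (rule subset_Zorn_nonempty)
    show "P \<noteq> {}" using cof by auto
    fix C assume C: "C \<noteq> {}" "subset.chain P C"
    then have CP: "C \<subseteq> P" and ch: "\<forall>X\<in>C. \<forall>Y\<in>C. X \<subseteq> Y \<or> Y \<subseteq> X"
      by (auto simp: subset_chain_def)
    have f: "\<And>F. F \<in> C \<Longrightarrow> filter_on_nat F \<and> nonprincipal F" using CP unfolding P_def by auto
    show "\<Union>C \<in> P"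
      unfolding P_def filter_on_nat_def nonprincipal_def
    proof (intro CollectI conjI allI impI)
      obtain F0 where "F0 \<in> C" using C by auto
      then show "UNIV \<in> \<Union>C" using f[of F0] unfolding filter_on_nat_def by auto
      show "{} \<notin> \<Union>C" using f unfolding filter_on_nat_def by auto
      show "B \<in> \<Union>C" if "A \<in> \<Union>C" "A \<subseteq> B" for A B
        using that f unfolding filter_on_nat_def by blast
      show "A \<inter> B \<in> \<Union>C" if AB: "A \<in> \<Union>C" "B \<in> \<Union>C" for A B
      proof -
        obtain F1 where F1: "F1 \<in> C" "A \<in> F1" using AB(1) by blast
        obtain F2 where F2: "F2 \<in> C" "B \<in> F2" using AB(2) by blast
        note F = F1(1) F2(1) F1(2) F2(2)
        show ?thesis
        proof (cases "F1 \<subseteq> F2")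
          case True
          then show ?thesis using F f[of F2] unfolding filter_on_nat_def by blast
        next
          case False
          then have "F2 \<subseteq> F1" using ch F by blast
          then show ?thesis using F f[of F1] unfolding filter_on_nat_def by blast
        qed
      qed
      show "A \<in> \<Union>C" if "finite (UNIV - A)" for A
        using that f \<open>F0 \<in> C\<close> unfolding nonprincipal_def by blast
    qed
  qed
  then obtain M where M: "M \<in> P" and max: "\<And>X. X \<in> P \<Longrightarrow> M \<subseteq> X \<Longrightarrow> X = M" by blast
  have Mf: "filter_on_nat M" "nonprincipal M" using M unfolding P_def by auto
  have "A \<in> M \<or> - A \<in> M" for A
  proof (cases "\<exists>B\<in>M. B \<inter> A = {}")
    case True
    then obtain B where "B \<in> M" "B \<subseteq> - A" by auto
    then show ?thesis using Mf(1) unfolding filter_on_nat_def by blast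
  next
    case False
    define M' where "M' = {C. \<exists>B\<in>M. B \<inter> A \<subseteq> C}"
    have "M' \<in> P"
      unfolding P_def filter_on_nat_def nonprincipal_def
    proof (intro CollectI conjI allI impI)
      show "UNIV \<in> M'" unfolding M'_def using Mf(1) unfolding filter_on_nat_def by auto
      show "{} \<notin> M'" unfolding M'_def using False by auto
      show "Y \<in> M'" if "X \<in> M'" "X \<subseteq> Y" for X Y using that unfolding M'_def by blast
      show "X \<inter> Y \<in> M'" if XY: "X \<in> M'" "Y \<in> M'" for X Y
      proof -
        obtain B1 B2 where "B1 \<in> M" "B2 \<in> M" "B1 \<inter> A \<subseteq> X" "B2 \<inter> A \<subseteq> Y"
          using XY unfolding M'_def by auto
        moreover have "B1 \<inter> B2 \<in> M" using calculation Mf(1) unfolding filter_on_nat_def by blast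
        ultimately show ?thesis unfolding M'_def by blast
      qed
      show "X \<in> M'" if "finite (UNIV - X)" for X
        using that Mf(2) unfolding M'_def nonprincipal_def by blast
    qed
    moreover have "M \<subseteq> M'" unfolding M'_def by blast
    ultimately have "M' = M" by (rule max)
    moreover have "A \<in> M'" unfolding M'_def using Mf(1) unfolding filter_on_nat_def by blast
    ultimately show ?thesis by simp
  qed
  then show ?thesis using Mf by blast
qed

lemma char_funs_iff: "x \<in> char_funs F \<longleftrightarrow> {n. x n} \<in> F"
proof
  assume "x \<in> char_funs F"
  then obtain A where "A \<in> F" "x = (\<lambda>n. n \<in> A)" unfolding char_funs_def by auto
  then show "{n. x n} \<in> F" by simp
next
  assume "{n. x n} \<in> F"
  moreover have "x = (\<lambda>n. n \<in> {n. x n})" by simp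
  ultimately show "x \<in> char_funs F" unfolding char_funs_def by blast
qed

lemma nxt_prop:
  assumes "infinite (S::nat set)"
  shows "n \<le> (LEAST m. n \<le> m \<and> m \<in> S) \<and> (LEAST m. n \<le> m \<and> m \<in> S) \<in> S"
proof -
  from assms obtain m where "n \<le> m" "m \<in> S" using infinite_nat_iff_unbounded_le by blast
  then show ?thesis using LeastI_ex[of "\<lambda>m. n \<le> m \<and> m \<in> S"] by blast
qed

lemma finite_bounded_family:
  assumes "finite (G :: (nat \<Rightarrow> nat) set)"
  shows "\<exists>g. \<forall>f\<in>G. eventually_dominated f g"
proof -
  define g where "g n = Max (insert 0 ((\<lambda>f. f n) ` G))" for n
  have "f n \<le> g n" if "f \<in> G" for f n
    unfolding g_def using assms that by (intro Max_ge) auto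
  then show ?thesis unfolding eventually_dominated_def by (auto intro!: always_eventually)
qed

lemma meager_mono: "meager B \<Longrightarrow> A \<subseteq> B \<Longrightarrow> meager A"
  unfolding meager_def
  apply (elim exE conjE)
  apply (rule exI, rule conjI, assumption)
  apply (rule order_trans, assumption, assumption)
  done

theorem theorem2p4:
  assumes "unif_less_b"
  shows "\<exists>\<F>. filter_on_nat \<F> \<and> nonprincipal \<F> \<and>
           meager (char_funs \<F>) \<and> \<not> lebesgue_measurable_cantor (char_funs \<F>)"
proof -
  obtain U where Uf: "filter_on_nat U" and Un: "nonprincipal U" and Uu: "\<And>A. A \<in> U \<or> - A \<in> U"
    using ultra_exists by blast
  from assms obtain X :: "(nat \<Rightarrow> bool) set" where X: "\<not> measure_zero_cantor X"
    and Xb: "\<And>F :: (nat \<Rightarrow> nat) set. unbounded_family F \<Longrightarrow> |X| <o |F|"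
    unfolding unif_less_b_def by blast
  define h where "h x = (if {n. x n} \<in> U then x else flip UNIV x)" for x :: "nat \<Rightarrow> bool"
  define Y where "Y = h ` X"
  have YU: "{n. y n} \<in> U" if yY: "y \<in> Y" for y
  proof -
    obtain x where x: "x \<in> X" "y = h x" using yY unfolding Y_def by auto
    show ?thesis
    proof (cases "{n. x n} \<in> U")
      case True then show ?thesis using x unfolding h_def by simp
    next
      case False
      then have "- {n. x n} \<in> U" using Uu by blast
      moreover have "{n. flip UNIV x n} = - {n. x n}" unfolding flip_def by auto
      ultimately show ?thesis using x False unfolding h_def by simp
    qed
  qed
  have Ynn: "Y \<notin> null_sets (completion coin_measure)"
  proof
    assume "Y \<in> null_sets (completion coin_measure)"
    then obtain N' where N': "N' \<in> null_sets coin_measure" "Y \<subseteq> N'"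
      unfolding null_sets_completion_iff2 by blast
    have "X \<subseteq> N' \<union> flip UNIV -` N'"
    proof
      fix x assume "x \<in> X"
      then have "h x \<in> N'" using N' unfolding Y_def by auto
      then show "x \<in> N' \<union> flip UNIV -` N'" unfolding h_def by (auto split: if_splits)
    qed
    moreover have "N' \<union> flip UNIV -` N' \<in> null_sets coin_measure"
      using N' flip_null[OF N'(1), of UNIV] by auto
    ultimately have "X \<in> null_sets (completion coin_measure)"
      unfolding null_sets_completion_iff2 by blast
    then show False using X unfolding measure_zero_cantor_def by simp
  qed
  define Ys where "Ys = (\<lambda>y. {n::nat. y n}) ` Y"
  have cardYs: "|Ys| \<le>o |X|"
  proof -
    have "|Ys| \<le>o |Y|" unfolding Ys_def by (rule card_of_image)
    moreover have "|Y| \<le>o |X|" unfolding Y_def by (rule card_of_image)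
    ultimately show ?thesis by (rule ordLeq_transitive)
  qed
  have YsU: "Ys \<subseteq> U" using YU unfolding Ys_def by auto
  have UI: "A \<in> U \<Longrightarrow> B \<in> U \<Longrightarrow> A \<inter> B \<in> U" for A B using Uf unfolding filter_on_nat_def by blast
  have Uup: "A \<in> U \<Longrightarrow> A \<subseteq> B \<Longrightarrow> B \<in> U" for A B using Uf unfolding filter_on_nat_def by blast
  have U0: "{} \<notin> U" "UNIV \<in> U" using Uf unfolding filter_on_nat_def by auto
  have Ucof: "{m..} \<in> U" for m
  proof -
    have "finite (UNIV - {m..})" by (simp add: Compl_eq_Diff_UNIV[symmetric] Compl_atLeast)
    then show ?thesis using Un unfolding nonprincipal_def by blast
  qed
  have interU: "\<Inter>T \<in> U" if "T \<in> Fpow Ys" for T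
  proof -
    have "finite T" "T \<subseteq> U" using that YsU unfolding Fpow_def by auto
    then show ?thesis
    proof (induction T rule: finite_induct)
      case empty then show ?case using U0 by simp
    next
      case (insert t T) then show ?case using UI by simp
    qed
  qed
  have infU: "infinite S" if SU: "S \<in> U" for S
  proof
    assume "finite S"
    then have "finite (UNIV - (- S))" by simp
    then have "- S \<in> U" using Un unfolding nonprincipal_def by blast
    then have "S \<inter> - S \<in> U" by (rule UI[OF SU])
    then show False using U0 by simp
  qed
  define nxt where "nxt S n = (LEAST m. n \<le> m \<and> m \<in> S)" for S :: "nat set" and n :: nat
  have nxt: "n \<le> nxt S n \<and> nxt S n \<in> S" if "S \<in> U" for S n
    unfolding nxt_def using nxt_prop[OF infU[OF that]] .
  define G where "G = (\<lambda>T. nxt (\<Inter>T)) ` Fpow Ys"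
  have "\<exists>g. \<forall>f\<in>G. eventually_dominated f g"
  proof (cases "finite Ys")
    case True
    then have "finite (Fpow Ys)" by (simp add: Fpow_Pow_finite)
    then have "finite G" unfolding G_def by simp
    then show ?thesis by (rule finite_bounded_family)
  next
    case False
    have "|G| \<le>o |Fpow Ys|" unfolding G_def by (rule card_of_image)
    moreover have "|Fpow Ys| =o |Ys|" using False by simp
    ultimately have "|G| \<le>o |Ys|" by (rule ordLeq_ordIso_trans)
    then have GX: "|G| \<le>o |X|" using cardYs by (rule ordLeq_transitive)
    have "\<not> unbounded_family G"
    proof
      assume "unbounded_family G"
      then have "|X| <o |G|" by (rule Xb)
      then show False using GX not_ordLess_ordLeq by metis
    qed
    then show ?thesis unfolding unbounded_family_def by blast
  qed
  then obtain g where g: "\<And>f. f \<in> G \<Longrightarrow> eventually_dominated f g" by blast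
  define a where "a k = rec_nat 0 (\<lambda>_ ak. Suc (max (g ak) ak)) k" for k
  have a0: "a 0 = 0" and aS: "a (Suc k) = Suc (max (g (a k)) (a k))" for k unfolding a_def by simp_all
  have a_ge: "j \<le> a j" for j
    by (induction j) (auto simp: a0 aS)
  define F where "F = {A. \<exists>T\<in>Fpow Ys. \<exists>m. \<Inter>T \<inter> {m..} \<subseteq> A}"
  have FU: "A \<in> U" if AF: "A \<in> F" for A
  proof -
    obtain T m where T: "T \<in> Fpow Ys" "\<Inter>T \<inter> {m..} \<subseteq> A" using AF unfolding F_def by blast
    have "\<Inter>T \<inter> {m..} \<in> U" by (rule UI[OF interU[OF T(1)] Ucof])
    then show ?thesis using T(2) by (rule Uup)
  qed
  have filt: "filter_on_nat F"
    unfolding filter_on_nat_def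
  proof (intro conjI allI impI)
    show "UNIV \<in> F" unfolding F_def by (auto simp: Fpow_def)
    show "{} \<notin> F" using FU U0 by blast
    show "B \<in> F" if "A \<in> F" "A \<subseteq> B" for A B using that unfolding F_def by blast
    show "A \<inter> B \<in> F" if AB: "A \<in> F" "B \<in> F" for A B
    proof -
      obtain T1 m1 where 1: "T1 \<in> Fpow Ys" "\<Inter>T1 \<inter> {m1..} \<subseteq> A" using AB(1) unfolding F_def by blast
      obtain T2 m2 where 2: "T2 \<in> Fpow Ys" "\<Inter>T2 \<inter> {m2..} \<subseteq> B" using AB(2) unfolding F_def by blast
      have "T1 \<union> T2 \<in> Fpow Ys" using 1 2 unfolding Fpow_def by auto
      moreover have "\<Inter>(T1 \<union> T2) \<inter> {max m1 m2..} \<subseteq> A \<inter> B" using 1 2 by auto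
      ultimately show ?thesis unfolding F_def by blast
    qed
  qed
  have nonp: "nonprincipal F"
    unfolding nonprincipal_def
  proof (intro allI impI)
    fix A :: "nat set" assume "finite (UNIV - A)"
    then obtain m where "UNIV - A \<subseteq> {..<m}" using finite_nat_bounded by presburger
    then have "\<Inter>{} \<inter> {m..} \<subseteq> A" by force
    moreover have "{} \<in> Fpow Ys" by (simp add: Fpow_def)
    ultimately show "A \<in> F" unfolding F_def by blast
  qed
  have meag: "meager (char_funs F)"
  proof -
    have sub: "char_funs F \<subseteq> {x. \<exists>k. \<forall>j\<ge>k. \<exists>i. a j \<le> i \<and> i < a (Suc j) \<and> x i}"
    proof
      fix x assume "x \<in> char_funs F"
      then have "{n. x n} \<in> F" by (simp add: char_funs_iff)
      then obtain T m where T: "T \<in> Fpow Ys" "\<Inter>T \<inter> {m..} \<subseteq> {n. x n}" unfolding F_def by blast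
      define S where "S = \<Inter>T"
      have SU: "S \<in> U" unfolding S_def using interU[OF T(1)] .
      have "nxt S \<in> G" unfolding G_def S_def using T(1) by (rule imageI)
      then have "eventually_dominated (nxt S) g" by (rule g)
      then have "\<exists>N. \<forall>n\<ge>N. nxt S n \<le> g n"
        unfolding eventually_dominated_def eventually_sequentially .
      then obtain N where N: "\<And>n. n \<ge> N \<Longrightarrow> nxt S n \<le> g n" by auto
      have "\<exists>i. a j \<le> i \<and> i < a (Suc j) \<and> x i" if j: "j \<ge> max N m" for j
      proof (intro exI conjI)
        have ja: "j \<le> a j" by (rule a_ge)
        show "a j \<le> nxt S (a j)" using nxt[OF SU, of "a j"] by simp
        have "nxt S (a j) \<le> g (a j)" using N ja j by simp
        then show "nxt S (a j) < a (Suc j)" unfolding aS by simp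
        have "nxt S (a j) \<in> S" using nxt[OF SU, of "a j"] by simp
        moreover have "nxt S (a j) \<ge> m" using nxt[OF SU, of "a j"] ja j by simp
        ultimately show "x (nxt S (a j))" using T(2) unfolding S_def by auto
      qed
      then have "\<forall>j\<ge>max N m. \<exists>i. a j \<le> i \<and> i < a (Suc j) \<and> x i" by simp
      then show "x \<in> {x. \<exists>k. \<forall>j\<ge>k. \<exists>i. a j \<le> i \<and> i < a (Suc j) \<and> x i}" by (intro CollectI exI)
    qed
    have "meager {x. \<exists>k. \<forall>j\<ge>k. \<exists>i. a j \<le> i \<and> i < a (Suc j) \<and> x i}"
      by (rule meager_partition) (rule a_ge)
    then show ?thesis using sub by (rule meager_mono)
  qed
  have nonmeas: "\<not> lebesgue_measurable_cantor (char_funs F)"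
  proof
    assume "lebesgue_measurable_cantor (char_funs F)"
    then have m: "char_funs F \<in> sets (completion coin_measure)" unfolding lebesgue_measurable_cantor_def .
    have inv: "flip s x \<in> char_funs F" if "finite s" "x \<in> char_funs F" for s x
    proof -
      have "{n. x n} \<in> F" using that by (simp add: char_funs_iff)
      then obtain T m where T: "T \<in> Fpow Ys" "\<Inter>T \<inter> {m..} \<subseteq> {n. x n}" unfolding F_def by blast
      obtain M where M: "s \<subseteq> {..<M}" using finite_nat_bounded[OF \<open>finite s\<close>] by blast
      have "\<Inter>T \<inter> {max m M..} \<subseteq> {n. flip s x n}"
      proof
        fix n assume n: "n \<in> \<Inter>T \<inter> {max m M..}"
        then have "n \<notin> s" using M by auto
        moreover have "x n" using T(2) n by auto
        ultimately show "n \<in> {n. flip s x n}" unfolding flip_def by simp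
      qed
      then have "{n. flip s x n} \<in> F" using T(1) unfolding F_def by blast
      then show ?thesis by (simp add: char_funs_iff)
    qed
    have disj: "flip UNIV x \<notin> char_funs F" if "x \<in> char_funs F" for x
    proof
      assume "flip UNIV x \<in> char_funs F"
      then have "{n. flip UNIV x n} \<in> F" "{n. x n} \<in> F" using that by (simp_all add: char_funs_iff)
      then have "{n. flip UNIV x n} \<inter> {n. x n} \<in> F" using filt unfolding filter_on_nat_def by blast
      moreover have "{n. flip UNIV x n} \<inter> {n. x n} = {}" unfolding flip_def by auto
      ultimately show False using filt unfolding filter_on_nat_def by simp
    qed
    have "char_funs F \<in> null_sets (completion coin_measure)"
      using zero_one[of "char_funs F", OF inv disj m] by simp
    moreover have "Y \<subseteq> char_funs F"
    proof
      fix y assume y: "y \<in> Y"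
      have "{{n. y n}} \<in> Fpow Ys" using y unfolding Ys_def Fpow_def by auto
      moreover have "\<Inter>{{n. y n}} \<inter> {0..} \<subseteq> {n. y n}" by auto
      ultimately have "{n. y n} \<in> F" unfolding F_def by blast
      then show "y \<in> char_funs F" by (simp add: char_funs_iff)
    qed
    ultimately have "Y \<in> null_sets (completion coin_measure)" by (rule null_sets_completion_subset[rotated])
    then show False using Ynn by simp
  qed
  show ?thesis using filt nonp meag nonmeas by blast
qed

end
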